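(* Let $\mathcal H$ be a real Hilbert space, $v\in\mathcal H$ with $\|v\|=1$, $P$ the orthogonal projection onto $\{v\}^\perp$, and order $\mathcal H$ by the Lorentz cone $\mathcal L_v=\{x\in\mathcal H:\langle v|x\rangle\ge\|Px\|\}$. Let $x\in\mathcal H$ and let $Q$ be the orthogonal projection onto $\mathrm{span}\{x,v\}$. If $y\in\mathcal H$ satisfies $-x\le y$ and $x\le y$, then $-x\le Qy$ and $x\le Qy$.
   Context: $a\le b$ means $b-a\in\mathcal L_v$. *)

theory Defs
  imports "HOL-Analysis.Analysis"
begin

definition orth_proj :: "'a::real_inner set \<Rightarrow> 'a \<Rightarrow> 'a" where
  "orth_proj S y = (THE p. p \<in> S \<and> y - p \<in> orthogonal_comp S)"

definition lorentz_cone :: "'a::real_inner \<Rightarrow> 'a set" where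
  "lorentz_cone v = {x. v \<bullet> x \<ge> norm (orth_proj (orthogonal_comp {v}) x)}"

definition lorentz_le :: "'a::real_inner \<Rightarrow> 'a \<Rightarrow> 'a \<Rightarrow> bool" where
  "lorentz_le v a b \<longleftrightarrow> b - a \<in> lorentz_cone v"

end

theory Submission
  imports Defs
begin

lemma orth_proj_eqI:
  assumes S: "subspace S" and p: "p \<in> S" and z: "y - p \<in> orthogonal_comp S"
  shows "orth_proj S y = p"
  unfolding orth_proj_def
proof (rule the_equality)
  show "p \<in> S \<and> y - p \<in> orthogonal_comp S" using p z by blast
next
  fix q assume q: "q \<in> S \<and> y - q \<in> orthogonal_comp S"
  have "q - p \<in> S" using q p S by (simp add: subspace_diff)
  moreover have "q - p \<in> orthogonal_comp S"
  proof -
    have "(y - p) - (y - q) \<in> orthogonal_comp S"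
      using q z subspace_orthogonal_comp by (blast intro: subspace_diff)
    thus ?thesis by simp
  qed
  ultimately have "orthogonal (q - p) (q - p)" unfolding orthogonal_comp_def by blast
  thus "q = p" by (simp add: orthogonal_def)
qed

lemma P_formula:
  assumes "norm v = 1"
  shows "orth_proj (orthogonal_comp {v}) z = z - (v \<bullet> z) *\<^sub>R v"
proof (rule orth_proj_eqI[OF subspace_orthogonal_comp])
  have vv: "v \<bullet> v = 1" using assms by (simp add: dot_square_norm)
  show "z - (v \<bullet> z) *\<^sub>R v \<in> orthogonal_comp {v}"
    by (simp add: orthogonal_comp_def orthogonal_def inner_diff_right vv)
  show "z - (z - (v \<bullet> z) *\<^sub>R v) \<in> orthogonal_comp (orthogonal_comp {v})"
    by (auto simp: orthogonal_comp_def orthogonal_def inner_commute)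
qed

lemma cone_iff:
  assumes "norm v = 1"
  shows "z \<in> lorentz_cone v \<longleftrightarrow> norm (z - (v \<bullet> z) *\<^sub>R v) \<le> v \<bullet> z"
  unfolding lorentz_cone_def using P_formula[OF assms] by simp

theorem lemma7p6:
  fixes v x y :: "'a::{real_inner, complete_space}"
  assumes "norm v = 1"
    and "lorentz_le v (- x) y"
    and "lorentz_le v x y"
  shows "lorentz_le v (- x) (orth_proj (span {x, v}) y)
       \<and> lorentz_le v x (orth_proj (span {x, v}) y)"
proof -
  have vv: "v \<bullet> v = 1" using assms by (simp add: dot_square_norm)
  define u where "u = x - (v \<bullet> x) *\<^sub>R v"
  define w where "w = y - (v \<bullet> y) *\<^sub>R v"
  define c where "c = (if u = 0 then 0 else (u \<bullet> y) / (u \<bullet> u))"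
  define p where "p = (v \<bullet> y) *\<^sub>R v + c *\<^sub>R u"
  have uv: "v \<bullet> u = 0" "u \<bullet> v = 0" unfolding u_def by (simp_all add: inner_diff_right inner_diff_left vv inner_commute)
  have uw: "u \<bullet> w = u \<bullet> y" unfolding w_def by (simp add: inner_diff_right uv)
  have xu: "x = u + (v \<bullet> x) *\<^sub>R v" unfolding u_def by simp
  have uspan: "u \<in> span {x, v}" unfolding u_def
    by (simp add: span_base span_diff span_scale)
  have pS: "p \<in> span {x, v}" unfolding p_def
    by (simp add: span_base span_add span_scale uspan)
  have o1: "v \<bullet> (y - p) = 0"
    unfolding p_def by (simp add: inner_diff_right inner_add_right uv vv)
  have o2: "u \<bullet> (y - p) = 0"
  proof (cases "u = 0")
    case True thus ?thesis by simp
  next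
    case False
    hence "u \<bullet> u \<noteq> 0" by simp
    thus ?thesis unfolding p_def c_def using False
      by (simp add: inner_diff_right inner_add_right uv)
  qed
  have o3: "x \<bullet> (y - p) = 0"
    by (subst xu) (simp add: inner_add_left o1 o2)
  have "y - p \<in> orthogonal_comp (span {x, v})"
    unfolding orthogonal_comp_def
  proof (clarify)
    fix z assume "z \<in> span {x, v}"
    thus "orthogonal z (y - p)"
      by (rule orthogonal_commute[THEN iffD1, OF orthogonal_to_span])
         (auto simp: orthogonal_def o1 o3 inner_commute)
  qed
  hence Qy: "orth_proj (span {x, v}) y = p"
    by (intro orth_proj_eqI[OF subspace_span pS])
  have key: "norm ((c + s) *\<^sub>R u) \<le> norm (w + s *\<^sub>R u)" for s
  proof (cases "u = 0")
    case True thus ?thesis by simp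
  next
    case False
    hence uu: "u \<bullet> u \<noteq> 0" by simp
    have wc: "u \<bullet> (w - c *\<^sub>R u) = 0" using False uu unfolding c_def
      by (simp add: inner_diff_right uw)
    have eq: "w + s *\<^sub>R u = (w - c *\<^sub>R u) + (c + s) *\<^sub>R u"
      by (simp add: algebra_simps)
    have "(w + s *\<^sub>R u) \<bullet> (w + s *\<^sub>R u)
        = (w - c *\<^sub>R u) \<bullet> (w - c *\<^sub>R u) + ((c + s) *\<^sub>R u) \<bullet> ((c + s) *\<^sub>R u)"
      apply (subst eq, subst eq)
      using wc by (simp add: inner_add_left inner_add_right inner_commute)
    moreover have "0 \<le> (w - c *\<^sub>R u) \<bullet> (w - c *\<^sub>R u)" by simp
    ultimately have "((c + s) *\<^sub>R u) \<bullet> ((c + s) *\<^sub>R u) \<le> (w + s *\<^sub>R u) \<bullet> (w + s *\<^sub>R u)"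
      by linarith
    thus ?thesis by (subst norm_le)
  qed
  have py: "v \<bullet> p = v \<bullet> y" unfolding p_def by (simp add: inner_add_right uv vv)
  have A: "norm (y + x - (v \<bullet> (y + x)) *\<^sub>R v) \<le> v \<bullet> (y + x)"
    using assms(2) cone_iff[OF assms(1)] unfolding lorentz_le_def by simp
  have B: "norm (y - x - (v \<bullet> (y - x)) *\<^sub>R v) \<le> v \<bullet> (y - x)"
    using assms(3) cone_iff[OF assms(1)] unfolding lorentz_le_def by simp
  have e1: "y + x - (v \<bullet> (y + x)) *\<^sub>R v = w + 1 *\<^sub>R u"
    unfolding w_def u_def by (simp add: inner_add_right algebra_simps)
  have e2: "y - x - (v \<bullet> (y - x)) *\<^sub>R v = w + (-1) *\<^sub>R u"
    unfolding w_def u_def by (simp add: inner_diff_right algebra_simps)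
  have f1: "p + x - (v \<bullet> (p + x)) *\<^sub>R v = (c + 1) *\<^sub>R u"
    unfolding inner_add_right py unfolding p_def u_def by (simp add: algebra_simps)
  have f2: "p - x - (v \<bullet> (p - x)) *\<^sub>R v = (c + -1) *\<^sub>R u"
    unfolding inner_diff_right py unfolding p_def u_def by (simp add: algebra_simps)
  have "norm (p + x - (v \<bullet> (p + x)) *\<^sub>R v) \<le> v \<bullet> (p + x)"
    using key[of 1] A unfolding e1 f1 by (simp add: inner_add_right py)
  moreover have "norm (p - x - (v \<bullet> (p - x)) *\<^sub>R v) \<le> v \<bullet> (p - x)"
    using key[of "-1"] B unfolding e2 f2 by (simp add: inner_diff_right py)
  ultimately show ?thesis unfolding Qy lorentz_le_def cone_iff[OF assms(1)] by simp
qed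

end
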